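(* Let $(M,d)$ be a complete pointed metric space. Then $\delta(M)$ is a weakly closed subset of $\mathcal F(M)$.
   Context: A pointed metric space is a metric space with a distinguished point $0$. $\mathrm{Lip}_0(M)$ denotes the real-valued Lipschitz functions on $M$ vanishing at $0$, normed by the Lipschitz constant. $\delta:M\to\mathrm{Lip}_0(M)^*$, $\delta(x)(\varphi)=\varphi(x)$; the Lipschitz-free space $\mathcal F(M)$ is the norm-closed linear span of $\delta(M)$ in $\mathrm{Lip}_0(M)^*$ (its dual is isometric to $\mathrm{Lip}_0(M)$). *)

theory Defs
  imports "HOL-Analysis.Analysis"
begin

definition Lip0 :: "'a::metric_space \<Rightarrow> ('a \<Rightarrow> real) set" where
  "Lip0 p0 = {f. (\<exists>C. lipschitz_on C UNIV f) \<and> f p0 = 0}"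

definition lipnorm :: "('a::metric_space \<Rightarrow> real) \<Rightarrow> real" where
  "lipnorm f = Inf {C. lipschitz_on C UNIV f}"

text \<open>The dual Lip_0(M)^*: bounded linear functionals on Lip_0(M). They are represented
  as functions on all of 'a => real, normalised to be 0 outside Lip_0(M).\<close>
definition LipDual :: "'a::metric_space \<Rightarrow> (('a \<Rightarrow> real) \<Rightarrow> real) set" where
  "LipDual p0 = {\<Phi>.
     (\<forall>f\<in>Lip0 p0. \<forall>g\<in>Lip0 p0. \<forall>a b::real. \<Phi> (\<lambda>x. a * f x + b * g x) = a * \<Phi> f + b * \<Phi> g)
   \<and> (\<exists>K. \<forall>f\<in>Lip0 p0. \<bar>\<Phi> f\<bar> \<le> K * lipnorm f)
   \<and> (\<forall>f. f \<notin> Lip0 p0 \<longrightarrow> \<Phi> f = 0)}"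

definition dnorm :: "'a::metric_space \<Rightarrow> (('a \<Rightarrow> real) \<Rightarrow> real) \<Rightarrow> real" where
  "dnorm p0 \<Phi> = Sup {\<bar>\<Phi> f\<bar> | f. f \<in> Lip0 p0 \<and> lipnorm f \<le> 1}"

definition delta :: "'a::metric_space \<Rightarrow> 'a \<Rightarrow> (('a \<Rightarrow> real) \<Rightarrow> real)" where
  "delta p0 x = (\<lambda>f. if f \<in> Lip0 p0 then f x else 0)"

definition delta_span :: "'a::metric_space \<Rightarrow> (('a \<Rightarrow> real) \<Rightarrow> real) set" where
  "delta_span p0 = {(\<lambda>f. \<Sum>i<n. c i * delta p0 (p i) f) | (n::nat) (c::nat \<Rightarrow> real) (p::nat \<Rightarrow> 'a). True}"

definition Free :: "'a::metric_space \<Rightarrow> (('a \<Rightarrow> real) \<Rightarrow> real) set" where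
  "Free p0 = {\<mu> \<in> LipDual p0. \<forall>e>0. \<exists>\<nu>\<in>delta_span p0. dnorm p0 (\<lambda>f. \<mu> f - \<nu> f) < e}"

definition FreeDual :: "'a::metric_space \<Rightarrow> ((('a \<Rightarrow> real) \<Rightarrow> real) \<Rightarrow> real) set" where
  "FreeDual p0 = {L.
     (\<forall>\<mu>\<in>Free p0. \<forall>\<nu>\<in>Free p0. \<forall>a b::real.
        L (\<lambda>f. a * \<mu> f + b * \<nu> f) = a * L \<mu> + b * L \<nu>)
   \<and> (\<exists>K. \<forall>\<mu>\<in>Free p0. \<bar>L \<mu>\<bar> \<le> K * dnorm p0 \<mu>)}"

definition weak_Free :: "'a::metric_space \<Rightarrow> (('a \<Rightarrow> real) \<Rightarrow> real) topology" where
  "weak_Free p0 = topology_generated_by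
     {Free p0 \<inter> {\<mu>. L \<mu> \<in> U} | L U. L \<in> FreeDual p0 \<and> open U}"

end

theory Submission
  imports Defs
begin


lemma lipnorm_lip:
  assumes "\<exists>C. lipschitz_on C UNIV (f::'a::metric_space \<Rightarrow> real)"
  shows "lipschitz_on (lipnorm f) UNIV f"
proof -
  let ?S = "{C. lipschitz_on C UNIV f}"
  have ne: "?S \<noteq> {}" using assms by auto
  have nn: "0 \<le> lipnorm f" unfolding lipnorm_def
    by (rule cInf_greatest[OF ne]) (auto dest: lipschitz_on_nonneg)
  show ?thesis
  proof (rule lipschitz_onI[OF _ nn])
    fix x y :: 'a
    show "dist (f x) (f y) \<le> lipnorm f * dist x y"
    proof (cases "dist x y = 0")
      case True
      then have "x = y" by simp
      then show ?thesis by simp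
    next
      case False
      then have dp: "dist x y > 0" by simp
      have "dist (f x) (f y) / dist x y \<le> lipnorm f" unfolding lipnorm_def
      proof (rule cInf_greatest[OF ne])
        fix C assume "C \<in> ?S"
        then have "dist (f x) (f y) \<le> C * dist x y" by (auto dest: lipschitz_onD)
        then show "dist (f x) (f y) / dist x y \<le> C" using dp by (simp add: divide_le_eq)
      qed
      then show ?thesis using dp by (simp add: divide_le_eq)
    qed
  qed
qed

lemma lipnorm_le:
  assumes "lipschitz_on C UNIV f" shows "lipnorm f \<le> C"
  unfolding lipnorm_def
  by (rule cInf_lower) (use assms in \<open>auto intro!: bdd_belowI[of _ 0] dest: lipschitz_on_nonneg\<close>)

lemma Lip0_lip: "f \<in> Lip0 p0 \<Longrightarrow> lipschitz_on (lipnorm f) UNIV f"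
  unfolding Lip0_def by (auto intro: lipnorm_lip)

lemma Lip0_nonneg: "f \<in> Lip0 p0 \<Longrightarrow> 0 \<le> lipnorm f"
  using Lip0_lip lipschitz_on_nonneg by blast

lemma Lip0_bound: "f \<in> Lip0 p0 \<Longrightarrow> \<bar>f x\<bar> \<le> lipnorm f * dist x p0"
proof -
  assume f: "f \<in> Lip0 p0"
  then have "f p0 = 0" by (simp add: Lip0_def)
  with lipschitz_onD[OF Lip0_lip[OF f], of x p0] show ?thesis by (simp add: dist_real_def)
qed

lemma Lip0_lin: "f \<in> Lip0 p0 \<Longrightarrow> g \<in> Lip0 p0 \<Longrightarrow> (\<lambda>x. a * f x + b * g x) \<in> Lip0 p0"
proof -
  assume f: "f \<in> Lip0 p0" and g: "g \<in> Lip0 p0"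
  then obtain C D where "lipschitz_on C UNIV f" "lipschitz_on D UNIV g" "f p0 = 0" "g p0 = 0"
    unfolding Lip0_def by blast
  then have "lipschitz_on (\<bar>a\<bar>*C + \<bar>b\<bar>*D) UNIV (\<lambda>x. a * f x + b * g x)"
    by (intro lipschitz_on_add lipschitz_on_cmult_real)
  then show ?thesis using \<open>f p0 = 0\<close> \<open>g p0 = 0\<close> unfolding Lip0_def by auto
qed

lemma dnorm_bdd:
  assumes "\<exists>K. \<forall>f\<in>Lip0 p0. \<bar>\<Phi> f\<bar> \<le> K * lipnorm f"
  shows "bdd_above {\<bar>\<Phi> f\<bar> | f. f \<in> Lip0 p0 \<and> lipnorm f \<le> 1}"
proof -
  obtain K where K: "\<forall>f\<in>Lip0 p0. \<bar>\<Phi> f\<bar> \<le> K * lipnorm f" using assms by blast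
  show ?thesis
  proof (rule bdd_aboveI[of _ "max K 0"])
    fix y assume "y \<in> {\<bar>\<Phi> f\<bar> | f. f \<in> Lip0 p0 \<and> lipnorm f \<le> 1}"
    then obtain f where f: "f \<in> Lip0 p0" "lipnorm f \<le> 1" "y = \<bar>\<Phi> f\<bar>" by blast
    have "K * lipnorm f \<le> max K 0 * lipnorm f"
      using Lip0_nonneg[OF f(1)] by (intro mult_right_mono) auto
    also have "\<dots> \<le> max K 0" using f(2) Lip0_nonneg[OF f(1)]
      by (metis max.cobounded2 mult.right_neutral mult_left_mono)
    finally show "y \<le> max K 0" using K f by force
  qed
qed

lemma dnorm_ge:
  assumes "\<exists>K. \<forall>f\<in>Lip0 p0. \<bar>\<Phi> f\<bar> \<le> K * lipnorm f" "f \<in> Lip0 p0" "lipnorm f \<le> 1"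
  shows "\<bar>\<Phi> f\<bar> \<le> dnorm p0 \<Phi>"
  unfolding dnorm_def by (rule cSup_upper) (use assms dnorm_bdd[OF assms(1)] in auto)

lemma LipDual_eval:
  assumes mu: "\<mu> \<in> LipDual p0" and f: "f \<in> Lip0 p0"
  shows "\<bar>\<mu> f\<bar> \<le> lipnorm f * dnorm p0 \<mu>"
proof -
  have lin: "\<And>a b. \<mu> (\<lambda>x. a * f x + b * f x) = a * \<mu> f + b * \<mu> f"
    using mu f unfolding LipDual_def by blast
  have bd: "\<exists>K. \<forall>f\<in>Lip0 p0. \<bar>\<mu> f\<bar> \<le> K * lipnorm f" using mu unfolding LipDual_def by blast
  let ?c = "lipnorm f"
  show ?thesis
  proof (cases "?c = 0")
    case True
    have "\<And>x. f x = 0"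
    proof -
      fix x
      have "dist (f x) (f p0) \<le> 0" using lipschitz_onD[OF Lip0_lip[OF f], of x p0] True by simp
      then show "f x = 0" using f by (simp add: Lip0_def)
    qed
    then have "(\<lambda>x. 0 * f x + 0 * f x) = f" by auto
    then have "\<mu> f = 0" using lin[of 0 0] by simp
    then show ?thesis using True by simp
  next
    case False
    then have cp: "?c > 0" using Lip0_nonneg[OF f] by simp
    let ?g = "\<lambda>x. (1/?c) * f x + 0 * f x"
    have g: "?g \<in> Lip0 p0" by (rule Lip0_lin[OF f f])
    have "lipschitz_on 1 UNIV ?g"
    proof (rule lipschitz_onI)
      fix x y
      have "dist (f x) (f y) \<le> ?c * dist x y" by (rule lipschitz_onD[OF Lip0_lip[OF f]]) auto
      moreover have "?g x - ?g y = (f x - f y) / ?c" by (simp add: diff_divide_distrib)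
      ultimately show "dist (?g x) (?g y) \<le> 1 * dist x y" using cp
        by (simp add: dist_real_def divide_le_eq mult.commute)
    qed simp
    then have "lipnorm ?g \<le> 1" by (rule lipnorm_le)
    then have "\<bar>\<mu> ?g\<bar> \<le> dnorm p0 \<mu>" using dnorm_ge[OF bd g] by simp
    then have "\<bar>\<mu> f\<bar> / ?c \<le> dnorm p0 \<mu>" using lin[of "1/?c" 0] cp by (simp add: abs_mult)
    then show ?thesis using cp by (simp add: divide_le_eq mult.commute)
  qed
qed




lemma delta_LipDual: "delta p0 x \<in> LipDual p0"
  unfolding LipDual_def
proof (intro CollectI conjI ballI allI impI)
  fix f g a b assume "f \<in> Lip0 p0" "g \<in> Lip0 p0"
  then show "delta p0 x (\<lambda>x. a * f x + b * g x) = a * delta p0 x f + b * delta p0 x g"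
    by (simp add: delta_def Lip0_lin)
next
  show "\<exists>K. \<forall>f\<in>Lip0 p0. \<bar>delta p0 x f\<bar> \<le> K * lipnorm f"
    by (rule exI[of _ "dist x p0"]) (auto simp: delta_def mult.commute intro: Lip0_bound)
next
  fix f assume "f \<notin> Lip0 p0" then show "delta p0 x f = 0" by (simp add: delta_def)
qed

lemma zero_Lip0: "(\<lambda>x. 0) \<in> Lip0 (p0::'a::metric_space)" "lipnorm (\<lambda>x::'a::metric_space. 0::real) \<le> 1"
proof -
  have l: "lipschitz_on 0 UNIV (\<lambda>x::'a. 0::real)" by (rule lipschitz_onI) auto
  then show "(\<lambda>x. 0) \<in> Lip0 p0" unfolding Lip0_def by blast
  show "lipnorm (\<lambda>x::'a::metric_space. 0::real) \<le> 1" using lipnorm_le[OF l] by simp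
qed

lemma dnorm_zero: "dnorm p0 (\<lambda>f. 0) = 0"
proof -
  have "{\<bar>(\<lambda>f. 0::real) f\<bar> | f. f \<in> Lip0 p0 \<and> lipnorm f \<le> 1} = {0}"
    using zero_Lip0(1)[of p0] zero_Lip0(2) by auto
  then show ?thesis unfolding dnorm_def by simp
qed

lemma delta_Free: "delta p0 x \<in> Free p0"
  unfolding Free_def
proof (intro CollectI conjI allI impI delta_LipDual)
  fix e :: real assume e: "e > 0"
  have "delta p0 x = (\<lambda>f. \<Sum>i<(1::nat). (\<lambda>_. 1) i * delta p0 ((\<lambda>_. x) i) f)" by (simp add: lessThan_Suc)
  then have "delta p0 x \<in> delta_span p0" unfolding delta_span_def
    by (intro CollectI exI[of _ "1::nat"] exI[of _ "\<lambda>_. 1"] exI[of _ "\<lambda>_. x"]) simp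
  moreover have "dnorm p0 (\<lambda>f. delta p0 x f - delta p0 x f) < e" using dnorm_zero[of p0] e by simp
  ultimately show "\<exists>\<nu>\<in>delta_span p0. dnorm p0 (\<lambda>f. delta p0 x f - \<nu> f) < e" by blast
qed

lemma span_bound:
  assumes "\<nu> \<in> delta_span p0" shows "\<exists>K. \<forall>f\<in>Lip0 p0. \<bar>\<nu> f\<bar> \<le> K * lipnorm f"
proof -
  obtain n :: nat and c p where nu: "\<nu> = (\<lambda>f. \<Sum>i<n. c i * delta p0 (p i) f)"
    using assms unfolding delta_span_def by fastforce
  show ?thesis
  proof (intro exI ballI)
    fix f assume f: "f \<in> Lip0 p0"
    have "\<bar>\<nu> f\<bar> \<le> (\<Sum>i<n. \<bar>c i * f (p i)\<bar>)" unfolding nu using f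
      by (simp add: delta_def sum_abs)
    also have "\<dots> \<le> (\<Sum>i<n. \<bar>c i\<bar> * dist (p i) p0 * lipnorm f)"
    proof (rule sum_mono)
      fix i
      have "\<bar>f (p i)\<bar> \<le> lipnorm f * dist (p i) p0" by (rule Lip0_bound[OF f])
      then show "\<bar>c i * f (p i)\<bar> \<le> \<bar>c i\<bar> * dist (p i) p0 * lipnorm f"
        by (metis abs_ge_zero abs_mult mult.commute mult.left_commute mult_left_mono)
    qed
    also have "\<dots> = (\<Sum>i<n. \<bar>c i\<bar> * dist (p i) p0) * lipnorm f" by (simp add: sum_distrib_right)
    finally show "\<bar>\<nu> f\<bar> \<le> (\<Sum>i<n. \<bar>c i\<bar> * dist (p i) p0) * lipnorm f" .
  qed
qed

lemma eval_FreeDual: "f \<in> Lip0 p0 \<Longrightarrow> (\<lambda>\<mu>. \<mu> f) \<in> FreeDual p0"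
  unfolding FreeDual_def
  by (auto intro!: exI[of _ "lipnorm f"] LipDual_eval simp: Free_def)

lemma zero_FreeDual: "(\<lambda>\<mu>. 0) \<in> FreeDual p0"
  unfolding FreeDual_def by (auto intro!: exI[of _ 0])

lemma topspace_weak: "topspace (weak_Free p0) = Free p0"
proof -
  have "Free p0 \<in> {Free p0 \<inter> {\<mu>. L \<mu> \<in> U} | L U. L \<in> FreeDual p0 \<and> open U}"
    using zero_FreeDual[of p0] by (auto intro!: exI[of _ "\<lambda>\<mu>. 0"] exI[of _ UNIV])
  then show ?thesis unfolding weak_Free_def topology_generated_by_topspace by blast
qed

lemma Free_open: "openin (weak_Free p0) (Free p0)"
  using topspace_weak[of p0] by (metis openin_topspace)




lemma key:
  fixes p0 :: "'a::complete_space"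
  assumes mu: "\<mu> \<in> Free p0"
    and apx: "\<And>F \<eta>. finite F \<Longrightarrow> F \<subseteq> Lip0 p0 \<Longrightarrow> \<eta> > 0 \<Longrightarrow> \<exists>x. \<forall>f\<in>F. \<bar>f x - \<mu> f\<bar> < \<eta>"
  shows "\<mu> \<in> range (delta p0)"
proof -
  have muL: "\<mu> \<in> LipDual p0" using mu by (simp add: Free_def)
  define h where "h y = (\<lambda>x. dist x y - dist p0 y)" for y
  have hlip: "lipschitz_on 1 UNIV (h y)" for y
    by (rule lipschitz_onI) (auto simp: h_def dist_real_def, metric)
  have hL: "h y \<in> Lip0 p0" for y
    using hlip[of y] unfolding Lip0_def by (auto simp: h_def)
  define D where "D y = \<mu> (h y) + dist p0 y" for y
  have ap: "\<exists>x. (\<forall>f\<in>F. \<bar>f x - \<mu> f\<bar> < \<eta>) \<and> (\<forall>y\<in>Y. \<bar>dist x y - D y\<bar> < \<eta>)"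
    if "finite F" "F \<subseteq> Lip0 p0" "finite Y" "\<eta> > 0" for F Y \<eta>
  proof -
    have "finite (F \<union> h ` Y)" "F \<union> h ` Y \<subseteq> Lip0 p0" using that hL by auto
    from apx[OF this \<open>\<eta> > 0\<close>] obtain x where x: "\<forall>f\<in>F \<union> h ` Y. \<bar>f x - \<mu> f\<bar> < \<eta>" by blast
    have "\<bar>dist x y - D y\<bar> < \<eta>" if "y \<in> Y" for y
    proof -
      have "\<bar>h y x - \<mu> (h y)\<bar> < \<eta>" using x that by blast
      moreover have "h y x - \<mu> (h y) = dist x y - D y" by (simp add: h_def D_def)
      ultimately show ?thesis by simp
    qed
    then show ?thesis using x by blast
  qed
  have Dnn: "0 \<le> D y" for y
  proof -
    have "0 \<le> D y + e" if ep0: "e > 0" for e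
    proof -
      obtain x where "\<bar>dist x y - D y\<bar> < e" using ap[of "{}" "{y}" e] ep0 by auto
      moreover have "0 \<le> dist x y" by simp
      ultimately show ?thesis by linarith
    qed
    then show ?thesis using field_le_epsilon[of 0 "D y"] by auto
  qed
  have Dlip: "D z \<le> D y + dist y z" for y z
  proof (rule field_le_epsilon)
    fix e :: real assume e: "e > 0"
    obtain x where x: "\<bar>dist x y - D y\<bar> < e/2" "\<bar>dist x z - D z\<bar> < e/2"
      using ap[of "{}" "{y,z}" "e/2"] e by auto
    have "dist x z \<le> dist x y + dist y z" by (rule dist_triangle)
    then show "D z \<le> D y + dist y z + e" using x by linarith
  qed
  have Ddist: "dist y z \<le> D y + D z" for y z
  proof (rule field_le_epsilon)
    fix e :: real assume e: "e > 0"
    obtain x where x: "\<bar>dist x y - D y\<bar> < e/2" "\<bar>dist x z - D z\<bar> < e/2"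
      using ap[of "{}" "{y,z}" "e/2"] e by auto
    have "dist y z \<le> dist x y + dist x z" by (rule dist_triangle3)
    then show "dist y z \<le> D y + D z + e" using x by linarith
  qed
  have D0: "\<mu> = delta p0 y" if "D y = 0" for y
  proof
    fix g
    show "\<mu> g = delta p0 y g"
    proof (cases "g \<in> Lip0 p0")
      case False
      then show ?thesis using muL by (simp add: LipDual_def delta_def)
    next
      case True
      let ?L = "lipnorm g"
      have L0: "0 \<le> ?L" using Lip0_nonneg[OF True] .
      have "\<bar>\<mu> g - g y\<bar> \<le> 0 + e" if e: "e > 0" for e
      proof -
        define \<eta> where "\<eta> = e / (1 + ?L)"
        have ep: "\<eta> > 0" using e L0 by (simp add: \<eta>_def)
        obtain x where x: "\<bar>g x - \<mu> g\<bar> < \<eta>" "\<bar>dist x y - D y\<bar> < \<eta>"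
          using ap[of "{g}" "{y}" \<eta>] True ep by auto
        have "\<bar>g x - g y\<bar> \<le> ?L * dist x y"
          using lipschitz_onD[OF Lip0_lip[OF True], of x y] by (simp add: dist_real_def)
        also have "\<dots> \<le> ?L * \<eta>" using x(2) that L0 \<open>D y = 0\<close> by (intro mult_left_mono) auto
        finally have "\<bar>\<mu> g - g y\<bar> < \<eta> + ?L * \<eta>" using x(1) by linarith
        also have "\<eta> + ?L * \<eta> = \<eta> * (1 + ?L)" by (simp add: algebra_simps)
        also have "\<dots> = e" using L0 by (simp add: \<eta>_def)
        finally show ?thesis by simp
      qed
      then have "\<bar>\<mu> g - g y\<bar> \<le> 0" by (rule field_le_epsilon)
      then show ?thesis using True by (simp add: delta_def)
    qed
  qed
  show ?thesis
  proof (cases "\<forall>r>0. \<exists>y. D y < r")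
    case True
    then have "\<forall>n. \<exists>y. D y < inverse (real (Suc n))" by auto
    then have "\<exists>Y. \<forall>n. D (Y n) < inverse (real (Suc n))" by (rule choice)
    then obtain Y where Y: "\<And>n. D (Y n) < inverse (real (Suc n))" by blast
    have "Cauchy Y"
    proof (rule metric_CauchyI)
      fix e :: real assume e: "e > 0"
      obtain M where M: "inverse (real (Suc M)) < e/2" using reals_Archimedean[of "e/2"] e by auto
      have "dist (Y m) (Y n) < e" if "m \<ge> M" "n \<ge> M" for m n
      proof -
        have "inverse (real (Suc m)) \<le> inverse (real (Suc M))" "inverse (real (Suc n)) \<le> inverse (real (Suc M))"
          using that by (auto intro!: le_imp_inverse_le)
        then show ?thesis using Ddist[of "Y m" "Y n"] Y[of m] Y[of n] M by linarith
      qed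
      then show "\<exists>M. \<forall>m\<ge>M. \<forall>n\<ge>M. dist (Y m) (Y n) < e" by blast
    qed
    then obtain y where lim: "Y \<longlonglongrightarrow> y" using Cauchy_convergent convergent_def by blast
    have "D y \<le> 0 + e" if e: "e > 0" for e
    proof -
      obtain N1 where N1: "\<forall>n\<ge>N1. dist (Y n) y < e/2" using lim e unfolding lim_sequentially
        by (meson half_gt_zero)
      obtain M where M: "inverse (real (Suc M)) < e/2" using reals_Archimedean[of "e/2"] e by auto
      let ?n = "max N1 M"
      have "inverse (real (Suc ?n)) \<le> inverse (real (Suc M))" by (auto intro!: le_imp_inverse_le)
      moreover have "dist (Y ?n) y < e/2" using N1 by simp
      ultimately show ?thesis using Dlip[of y "Y ?n"] Y[of ?n] M by linarith
    qed
    then have "D y \<le> 0" by (rule field_le_epsilon)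
    then have "D y = 0" using Dnn[of y] by simp
    then show ?thesis using D0 by blast
  next
    case False
    then obtain r where r: "r > 0" "\<And>y. r \<le> D y" by (meson not_less)
    obtain \<nu> where nu: "\<nu> \<in> delta_span p0" "dnorm p0 (\<lambda>f. \<mu> f - \<nu> f) < r/2"
    proof -
      have "\<forall>e>0. \<exists>\<nu>\<in>delta_span p0. dnorm p0 (\<lambda>f. \<mu> f - \<nu> f) < e"
        using mu unfolding Free_def by blast
      moreover have "r/2 > 0" using r by simp
      ultimately show ?thesis using that by blast
    qed
    obtain n :: nat and c p where nueq: "\<nu> = (\<lambda>f. \<Sum>i<n. c i * delta p0 (p i) f)"
      using nu(1) unfolding delta_span_def by fastforce
    define P where "P = insert p0 (p ` {..<n})"
    have Pfin: "finite P" and Pne: "P \<noteq> {}" by (auto simp: P_def)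
    define f where "f x = min (r/2) (infdist x P)" for x
    have flip: "lipschitz_on 1 UNIV f"
    proof (rule lipschitz_onI)
      fix x y
      have "\<bar>infdist x P - infdist y P\<bar> \<le> dist x y" by (rule infdist_triangle_abs)
      then show "dist (f x) (f y) \<le> 1 * dist x y" unfolding f_def dist_real_def min_def by auto
    qed simp
    have "f p0 = 0" using r by (simp add: f_def P_def)
    then have fL: "f \<in> Lip0 p0" using flip unfolding Lip0_def by blast
    have fn: "lipnorm f \<le> 1" using lipnorm_le[OF flip] .
    have "f (p i) = 0" if "i < n" for i using r that by (simp add: f_def P_def)
    then have nuf: "\<nu> f = 0" using fL unfolding nueq delta_def by (simp add: sum.neutral)
    obtain K1 where K1: "\<forall>g\<in>Lip0 p0. \<bar>\<mu> g\<bar> \<le> K1 * lipnorm g" using muL unfolding LipDual_def by blast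
    obtain K2 where K2: "\<forall>g\<in>Lip0 p0. \<bar>\<nu> g\<bar> \<le> K2 * lipnorm g" using span_bound[OF nu(1)] by blast
    have "\<forall>g\<in>Lip0 p0. \<bar>\<mu> g - \<nu> g\<bar> \<le> (K1 + K2) * lipnorm g"
    proof
      fix g assume "g \<in> Lip0 p0"
      then have "\<bar>\<mu> g\<bar> \<le> K1 * lipnorm g" "\<bar>\<nu> g\<bar> \<le> K2 * lipnorm g" using K1 K2 by auto
      then show "\<bar>\<mu> g - \<nu> g\<bar> \<le> (K1 + K2) * lipnorm g" by (simp add: distrib_right)
    qed
    then have "\<bar>\<mu> f - \<nu> f\<bar> \<le> dnorm p0 (\<lambda>g. \<mu> g - \<nu> g)"
      using dnorm_ge[of p0 "\<lambda>g. \<mu> g - \<nu> g" f] fL fn by blast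
    then have muf: "\<bar>\<mu> f\<bar> < r/2" using nu(2) nuf by simp
    define \<eta> where "\<eta> = min (r/2 - \<bar>\<mu> f\<bar>) (r/2)"
    have ep: "\<eta> > 0" using muf r by (simp add: \<eta>_def)
    obtain x where x: "\<bar>f x - \<mu> f\<bar> < \<eta>" "\<forall>a\<in>P. \<bar>dist x a - D a\<bar> < \<eta>"
      using ap[of "{f}" P \<eta>] fL Pfin ep by auto
    have "r/2 \<le> infdist x P" unfolding infdist_notempty[OF Pne]
    proof (rule cINF_greatest[OF Pne])
      fix a assume "a \<in> P"
      then have "\<bar>dist x a - D a\<bar> < \<eta>" using x(2) by blast
      then show "r/2 \<le> dist x a" using r(2)[of a] by (simp add: \<eta>_def)
    qed
    then have "f x = r/2" by (simp add: f_def)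
    then show ?thesis using x(1) by (simp add: \<eta>_def)
  qed
qed




theorem proposition6p3:
  fixes p0 :: "'a::complete_space"
  shows "closedin (weak_Free p0) (delta p0 ` UNIV)"
proof -
  let ?B = "{Free p0 \<inter> {\<mu>. L \<mu> \<in> U} | L U. L \<in> FreeDual p0 \<and> open U}"
  have sub: "delta p0 ` UNIV \<subseteq> Free p0" using delta_Free by blast
  have "openin (weak_Free p0) (Free p0 - delta p0 ` UNIV)"
  proof (subst openin_subopen, intro ballI)
    fix \<mu> assume m: "\<mu> \<in> Free p0 - delta p0 ` UNIV"
    then have mF: "\<mu> \<in> Free p0" and mn: "\<mu> \<notin> range (delta p0)" by auto
    have "\<exists>F \<eta>. finite F \<and> F \<subseteq> Lip0 p0 \<and> \<eta> > 0 \<and> (\<forall>x. \<exists>f\<in>F. \<eta> \<le> \<bar>f x - \<mu> f\<bar>)"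
    proof (rule ccontr)
      assume H: "\<not> ?thesis"
      have "\<exists>x. \<forall>f\<in>F. \<bar>f x - \<mu> f\<bar> < \<eta>" if "finite F" "F \<subseteq> Lip0 p0" "\<eta> > 0" for F \<eta>
      proof (rule ccontr)
        assume "\<not> (\<exists>x. \<forall>f\<in>F. \<bar>f x - \<mu> f\<bar> < \<eta>)"
        then have "\<forall>x. \<exists>f\<in>F. \<eta> \<le> \<bar>f x - \<mu> f\<bar>" by (simp add: not_less)
        then show False using H that by blast
      qed
      from key[OF mF this] mn show False by blast
    qed
    then obtain F \<eta> where F: "finite F" "F \<subseteq> Lip0 p0" "\<eta> > 0" "\<forall>x. \<exists>f\<in>F. \<eta> \<le> \<bar>f x - \<mu> f\<bar>"
      by blast
    define T where "T = Free p0 \<inter> \<Inter> ((\<lambda>f. Free p0 \<inter> {\<nu>. (\<lambda>\<nu>. \<nu> f) \<nu> \<in> ball (\<mu> f) \<eta>}) ` F)"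
    have "openin (weak_Free p0) T" unfolding T_def
    proof (rule openin_Int_Inter[OF _ Free_open])
      show "finite ((\<lambda>f. Free p0 \<inter> {\<nu>. (\<lambda>\<nu>. \<nu> f) \<nu> \<in> ball (\<mu> f) \<eta>}) ` F)" using F by simp
    next
      fix X assume "X \<in> (\<lambda>f. Free p0 \<inter> {\<nu>. (\<lambda>\<nu>. \<nu> f) \<nu> \<in> ball (\<mu> f) \<eta>}) ` F"
      then obtain f where f: "f \<in> F" "X = Free p0 \<inter> {\<nu>. (\<lambda>\<nu>. \<nu> f) \<nu> \<in> ball (\<mu> f) \<eta>}" by blast
      have "X \<in> ?B" unfolding f(2)
        by (intro CollectI exI[of _ "\<lambda>\<nu>. \<nu> f"] exI[of _ "ball (\<mu> f) \<eta>"] conjI refl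
            eval_FreeDual open_ball) (use f(1) F(2) in blast)
      then show "openin (weak_Free p0) X" unfolding weak_Free_def by (rule topology_generated_by_Basis)
    qed
    moreover have "\<mu> \<in> T" using mF F(3) by (auto simp: T_def)
    moreover have "T \<subseteq> Free p0 - delta p0 ` UNIV"
    proof
      fix \<nu> assume nT: "\<nu> \<in> T"
      have "\<nu> \<notin> range (delta p0)"
      proof
        assume "\<nu> \<in> range (delta p0)"
        then obtain x where x: "\<nu> = delta p0 x" by blast
        obtain f where f: "f \<in> F" "\<eta> \<le> \<bar>f x - \<mu> f\<bar>" using F(4) by blast
        have "\<nu> f \<in> ball (\<mu> f) \<eta>" using nT f(1) unfolding T_def by blast
        moreover have "\<nu> f = f x" using x f(1) F(2) by (auto simp: delta_def)
        ultimately show False using f(2) by (simp add: dist_real_def)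
      qed
      then show "\<nu> \<in> Free p0 - delta p0 ` UNIV" using nT by (auto simp: T_def)
    qed
    ultimately show "\<exists>T. openin (weak_Free p0) T \<and> \<mu> \<in> T \<and> T \<subseteq> Free p0 - delta p0 ` UNIV"
      by blast
  qed
  then show ?thesis unfolding closedin_def topspace_weak using sub by blast
qed


end
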